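(* Let $x\in\mathbb{R}_+^n$ and let $\mathrm{IC}(\mathbf{a}_0,\dots,\mathbf{a}_{n-1})$ be an interval circulant matrix. Then $x\in\mathrm{Attr}(A)$ for all $A\in\mathrm{IC}(\mathbf{a}_0,\dots,\mathbf{a}_{n-1})$ if and only if $x\in\mathrm{Attr}(A^{(k)})$ for each $k\in\{0,\dots,n-1\}$.
   Context: Max algebra on $\mathbb{R}_+$: $\oplus=\max$, ordinary product; $\lambda(A)$ greatest max-algebraic eigenvalue (maximum cycle geometric mean); $\mathrm{Attr}(A)=\{x\in\mathbb{R}_+^n: A^{t+1}\otimes x=\lambda(A)A^t\otimes x\text{ for some }t\ge0\}$. $\mathrm{Circ}(a_0,\dots,a_{n-1})$ has entries $A_{i,j}=a_t$, $t\equiv j-i\pmod n$; $\mathrm{IC}(\mathbf{a}_0,\dots,\mathbf{a}_{n-1})$ is the set of all $\mathrm{Circ}(a_0,\dots,a_{n-1})$ with $a_t\in\mathbf{a}_t$, each $\mathbf{a}_t\subseteq\mathbb{R}_+$ a nonempty interval of one of the forms $[\underline{a}_t,\overline{a}_t]$, $(\underline{a}_t,\overline{a}_t)$, $(\underline{a}_t,\overline{a}_t]$, $[\underline{a}_t,\overline{a}_t)$. $A^{(k)}=\mathrm{Circ}(\underline{a}_0,\dots,\underline{a}_{k-1},\overline{a}_k,\underline{a}_{k+1},\dots,\underline{a}_{n-1})$. *)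

theory Defs
  imports Complex_Main
begin

text \<open>Square n x n matrices over the nonnegative reals are represented as
  functions nat => nat => real, only entries with indices < n being relevant;
  vectors as nat => real, only components < n being relevant.\<close>

definition mp_mult :: "nat \<Rightarrow> (nat \<Rightarrow> nat \<Rightarrow> real) \<Rightarrow> (nat \<Rightarrow> nat \<Rightarrow> real) \<Rightarrow> (nat \<Rightarrow> nat \<Rightarrow> real)" where
  "mp_mult n A B = (\<lambda>i j. Max ((\<lambda>l. A i l * B l j) ` {..<n}))"

definition mp_id :: "nat \<Rightarrow> nat \<Rightarrow> real" where
  "mp_id = (\<lambda>i j. if i = j then 1 else 0)"

primrec mp_pow :: "nat \<Rightarrow> (nat \<Rightarrow> nat \<Rightarrow> real) \<Rightarrow> nat \<Rightarrow> (nat \<Rightarrow> nat \<Rightarrow> real)" where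
  "mp_pow n A 0 = mp_id"
| "mp_pow n A (Suc t) = mp_mult n A (mp_pow n A t)"

definition mp_vec :: "nat \<Rightarrow> (nat \<Rightarrow> nat \<Rightarrow> real) \<Rightarrow> (nat \<Rightarrow> real) \<Rightarrow> (nat \<Rightarrow> real)" where
  "mp_vec n A x = (\<lambda>i. Max ((\<lambda>j. A i j * x j) ` {..<n}))"

definition mp_lambda :: "nat \<Rightarrow> (nat \<Rightarrow> nat \<Rightarrow> real) \<Rightarrow> real" where
  "mp_lambda n A = Max {root k (\<Prod>j<k. A (\<sigma> j) (\<sigma> ((j + 1) mod k))) | k \<sigma>.
       1 \<le> k \<and> k \<le> n \<and> (\<forall>j<k. \<sigma> j < n) \<and> (\<forall>j\<ge>k. \<sigma> j = 0)}"

definition nonneg_vec :: "nat \<Rightarrow> (nat \<Rightarrow> real) \<Rightarrow> bool" where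
  "nonneg_vec n x \<longleftrightarrow> (\<forall>j<n. 0 \<le> x j)"

definition Attr :: "nat \<Rightarrow> (nat \<Rightarrow> nat \<Rightarrow> real) \<Rightarrow> (nat \<Rightarrow> real) set" where
  "Attr n A = {x. nonneg_vec n x \<and>
     (\<exists>t. \<forall>i<n. mp_vec n (mp_pow n A (Suc t)) x i = mp_lambda n A * mp_vec n (mp_pow n A t) x i)}"

definition Circ :: "nat \<Rightarrow> (nat \<Rightarrow> real) \<Rightarrow> (nat \<Rightarrow> nat \<Rightarrow> real)" where
  "Circ n a = (\<lambda>i j. a ((j + n - i) mod n))"

definition is_interval_lh :: "real \<Rightarrow> real \<Rightarrow> real set \<Rightarrow> bool" where
  "is_interval_lh lo hi S \<longleftrightarrow> 0 \<le> lo \<and> S \<noteq> {} \<and>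
     (S = {lo..hi} \<or> S = {lo<..<hi} \<or> S = {lo<..hi} \<or> S = {lo..<hi})"

definition IC :: "nat \<Rightarrow> (nat \<Rightarrow> real set) \<Rightarrow> (nat \<Rightarrow> nat \<Rightarrow> real) set" where
  "IC n I = {Circ n a | a. \<forall>t<n. a t \<in> I t}"

definition Ak :: "nat \<Rightarrow> (nat \<Rightarrow> real) \<Rightarrow> (nat \<Rightarrow> real) \<Rightarrow> nat \<Rightarrow> (nat \<Rightarrow> nat \<Rightarrow> real)" where
  "Ak n lo hi k = Circ n (\<lambda>t. if t = k then hi t else lo t)"

end

theory Submission
  imports Defs
begin

definition cv :: "nat \<Rightarrow> (nat \<Rightarrow> real) \<Rightarrow> (nat \<Rightarrow> real) \<Rightarrow> (nat \<Rightarrow> real)" where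
  "cv n b y = (\<lambda>i. Max ((\<lambda>e. b e * y ((i + e) mod n)) ` {..<n}))"

fun cvp :: "nat \<Rightarrow> (nat \<Rightarrow> real) \<Rightarrow> nat \<Rightarrow> (nat \<Rightarrow> real) \<Rightarrow> (nat \<Rightarrow> real)" where
  "cvp n b 0 y = y"
| "cvp n b (Suc m) y = cv n b (cvp n b m y)"

lemma max_swap:
  fixes g :: "nat \<Rightarrow> nat \<Rightarrow> real"
  assumes "n \<ge> 1"
  shows "Max ((\<lambda>l. Max ((\<lambda>j. g l j) ` {..<n})) ` {..<n}) = Max ((\<lambda>j. Max ((\<lambda>l. g l j) ` {..<n})) ` {..<n})"
proof -
  have "0 \<in> {..<n}" using assms by simp
  then have ne: "{..<n} \<noteq> {}" by blast
  have "\<And>z. Max ((\<lambda>l. Max ((\<lambda>j. g l j) ` {..<n})) ` {..<n}) \<le> z \<longleftrightarrow> (\<forall>l<n. \<forall>j<n. g l j \<le> z)"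
    using assms by (auto simp: lessThan_empty_iff)
  moreover have "\<And>z. Max ((\<lambda>j. Max ((\<lambda>l. g l j) ` {..<n})) ` {..<n}) \<le> z \<longleftrightarrow> (\<forall>l<n. \<forall>j<n. g l j \<le> z)"
    using assms by (auto simp: lessThan_empty_iff)
  ultimately show ?thesis by (meson order.antisym order.refl)
qed

lemma mult_Max:
  fixes c :: real
  assumes "0 \<le> c" "finite A" "A \<noteq> {}"
  shows "c * Max (f ` A) = Max ((\<lambda>x. c * f x) ` A)"
proof -
  have "mono ((*) c)" using assms(1) by (simp add: mono_def mult_left_mono)
  from mono_Max_commute[OF this, of "f ` A"] assms show ?thesis by (simp add: image_image)
qed

lemma Max_mult:
  fixes c :: real
  assumes "0 \<le> c" "finite A" "A \<noteq> {}"
  shows "Max (f ` A) * c = Max ((\<lambda>x. f x * c) ` A)"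
  using mult_Max[OF assms, of f] by (simp add: mult.commute)

lemma mp_vec_mult:
  assumes n: "n \<ge> 1" and A: "\<forall>i j. 0 \<le> A i j" and B: "\<forall>i j. 0 \<le> B i j"
    and y: "\<forall>j<n. 0 \<le> y j"
  shows "mp_vec n (mp_mult n A B) y i = mp_vec n A (mp_vec n B y) i"
proof -
  have "0 \<in> {..<n}" using n by simp
  then have ne: "{..<n} \<noteq> {}" by blast
  have "mp_vec n A (mp_vec n B y) i = Max ((\<lambda>l. Max ((\<lambda>j. A i l * (B l j * y j)) ` {..<n})) ` {..<n})"
    unfolding mp_vec_def using mult_Max[OF _ _ ne] A n by (simp add: image_image lessThan_empty_iff)
  also have "\<dots> = Max ((\<lambda>j. Max ((\<lambda>l. A i l * (B l j * y j)) ` {..<n})) ` {..<n})"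
    by (rule max_swap[OF n])
  also have "\<dots> = mp_vec n (mp_mult n A B) y i"
    unfolding mp_vec_def mp_mult_def using Max_mult[OF _ _ ne] y
    by (auto simp: image_image mult.assoc intro!: arg_cong[where f=Max] image_cong)
  finally show ?thesis by simp
qed

lemma mp_mult_nonneg:
  assumes "n \<ge> 1" "\<forall>i j. 0 \<le> A i j" "\<forall>i j. 0 \<le> B i j"
  shows "0 \<le> mp_mult n A B i j"
proof -
  have "0 \<le> A i 0 * B 0 j" using assms by simp
  also have "\<dots> \<le> mp_mult n A B i j" unfolding mp_mult_def using assms(1) by (intro Max_ge) auto
  finally show ?thesis .
qed

lemma mp_pow_nonneg:
  assumes "n \<ge> 1" "\<forall>i j. 0 \<le> A i j"
  shows "\<forall>i j. 0 \<le> mp_pow n A m i j"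
  by (induction m) (auto simp: mp_id_def intro!: mp_mult_nonneg assms)

lemma mp_vec_nonneg:
  assumes "n \<ge> 1" "\<forall>i j. 0 \<le> A i j" "\<forall>j<n. 0 \<le> y j"
  shows "0 \<le> mp_vec n A y i"
proof -
  have "0 \<le> A i 0 * y 0" using assms by simp
  also have "\<dots> \<le> mp_vec n A y i" unfolding mp_vec_def using assms(1) by (intro Max_ge) auto
  finally show ?thesis .
qed

lemma mp_vec_id:
  assumes "i < n" "\<forall>j<n. 0 \<le> y j"
  shows "mp_vec n mp_id y i = y i"
proof -
  have "mp_vec n mp_id y i \<le> y i" unfolding mp_vec_def mp_id_def using assms
    by (subst Max_le_iff) auto
  moreover have "y i \<le> mp_vec n mp_id y i" unfolding mp_vec_def mp_id_def using assms
    by (intro Max_ge) (auto simp: image_iff intro!: bexI[of _ i])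
  ultimately show ?thesis by simp
qed

lemma mp_vec_cong:
  assumes "\<forall>j<n. y j = z j"
  shows "mp_vec n A y = mp_vec n A z"
  unfolding mp_vec_def using assms by (auto intro!: ext arg_cong[where f=Max] image_cong)

lemma cv_cong:
  assumes "n \<ge> 1" "\<forall>j<n. y j = z j"
  shows "cv n b y = cv n b z"
  unfolding cv_def using assms by (auto intro!: ext arg_cong[where f=Max] image_cong)

lemma shift_image:
  fixes i n :: nat
  assumes "i < n"
  shows "(\<lambda>e. (i + e) mod n) ` {..<n} = {..<n}"
proof
  have n0: "0 < n" using assms by simp
  show "(\<lambda>e. (i + e) mod n) ` {..<n} \<subseteq> {..<n}" using n0 by auto
  show "{..<n} \<subseteq> (\<lambda>e. (i + e) mod n) ` {..<n}"
  proof
    fix j assume j: "j \<in> {..<n}"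
    have "(i + (j + n - i) mod n) mod n = j" using assms j
      by (simp add: mod_add_right_eq)
    then show "j \<in> (\<lambda>e. (i + e) mod n) ` {..<n}" using assms by (auto intro!: image_eqI[of _ _ "(j + n - i) mod n"])
  qed
qed

lemma circ_vec:
  assumes n: "n \<ge> 1" and i: "i < n"
  shows "mp_vec n (Circ n a) y i = cv n a y i"
proof -
  have "mp_vec n (Circ n a) y i = Max ((\<lambda>j. a ((j + n - i) mod n) * y j) ` ((\<lambda>e. (i + e) mod n) ` {..<n}))"
    unfolding mp_vec_def Circ_def using shift_image[OF i] by simp
  also have "\<dots> = cv n a y i" unfolding cv_def image_image
  proof (intro arg_cong[where f=Max] image_cong refl)
    fix e assume e: "e \<in> {..<n}"
    have "((i + e) mod n + n - i) mod n = e"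
    proof (cases "i + e < n")
      case True then show ?thesis using e by simp
    next
      case False
      then have "(i + e) mod n = i + e - n" using i e by (simp add: mod_if)
      then show ?thesis using False i e by simp
    qed
    then show "a (((i + e) mod n + n - i) mod n) * y ((i + e) mod n) = a e * y ((i + e) mod n)" by simp
  qed
  finally show ?thesis .
qed

lemma cv_ge_term:
  assumes "e < n" shows "b e * y ((i + e) mod n) \<le> cv n b y i"
  unfolding cv_def using assms by (intro Max_ge) auto

lemma cv_attained:
  assumes "n \<ge> 1" shows "\<exists>e<n. cv n b y i = b e * y ((i + e) mod n)"
proof -
  have "0 \<in> {..<n}" using assms by simp
  then have "(\<lambda>e. b e * y ((i + e) mod n)) ` {..<n} \<noteq> {}" by blast
  from Max_in[OF _ this] show ?thesis unfolding cv_def by auto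
qed

lemma cv_le:
  assumes "n \<ge> 1" "\<forall>e<n. b e * y ((i + e) mod n) \<le> z" shows "cv n b y i \<le> z"
  using cv_attained[OF assms(1), of b y i] assms(2) by auto

lemma mod_lt: "(n::nat) \<ge> 1 \<Longrightarrow> k mod n < n" by simp

lemma cv_nonneg:
  assumes "n \<ge> 1" "\<forall>e<n. 0 \<le> b e" "\<forall>j<n. 0 \<le> y j" shows "0 \<le> cv n b y i"
proof -
  have "0 \<le> b 0 * y ((i + 0) mod n)" using assms by (simp add: mod_lt)
  also have "\<dots> \<le> cv n b y i" using assms by (intro cv_ge_term) auto
  finally show ?thesis .
qed

lemma cvp_nonneg:
  assumes "n \<ge> 1" "\<forall>e<n. 0 \<le> b e" "\<forall>j<n. 0 \<le> y j" shows "\<forall>j<n. 0 \<le> cvp n b m y j"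
  by (induction m) (use assms in \<open>auto intro!: cv_nonneg\<close>)

lemma cv_mono:
  assumes "n \<ge> 1" "\<forall>e<n. 0 \<le> b e" "\<forall>j<n. y j \<le> z j" shows "cv n b y i \<le> cv n b z i"
proof (rule cv_le[OF assms(1)], intro allI impI)
  fix e assume e: "e < n"
  have "b e * y ((i + e) mod n) \<le> b e * z ((i + e) mod n)"
    using assms e by (intro mult_left_mono) (auto simp: mod_lt)
  also have "\<dots> \<le> cv n b z i" using e by (rule cv_ge_term)
  finally show "b e * y ((i + e) mod n) \<le> cv n b z i" .
qed

lemma cvp_mono:
  assumes "n \<ge> 1" "\<forall>e<n. 0 \<le> b e" "\<forall>j<n. y j \<le> z j" shows "\<forall>j<n. cvp n b m y j \<le> cvp n b m z j"
  by (induction m) (use assms in \<open>auto intro!: cv_mono\<close>)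

lemma cv_mono_b:
  assumes "n \<ge> 1" "\<forall>j<n. 0 \<le> y j" "\<forall>e<n. b e \<le> b' e" shows "cv n b y i \<le> cv n b' y i"
proof (rule cv_le[OF assms(1)], intro allI impI)
  fix e assume e: "e < n"
  have "b e * y ((i + e) mod n) \<le> b' e * y ((i + e) mod n)"
    using assms e by (intro mult_right_mono) (auto simp: mod_lt)
  also have "\<dots> \<le> cv n b' y i" using e by (rule cv_ge_term)
  finally show "b e * y ((i + e) mod n) \<le> cv n b' y i" .
qed

lemma cvp_mono_b:
  assumes "n \<ge> 1" "\<forall>e<n. 0 \<le> b e" "\<forall>j<n. 0 \<le> y j" "\<forall>e<n. b e \<le> b' e"
  shows "\<forall>j<n. cvp n b m y j \<le> cvp n b' m y j"
proof (induction m)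
  case 0 then show ?case by simp
next
  case (Suc m)
  show ?case
  proof (intro allI impI)
    fix j assume j: "j < n"
    have b'nn: "\<forall>e<n. 0 \<le> b' e" using assms by (meson order.trans)
    have nn: "\<forall>j<n. 0 \<le> cvp n b' m y j" by (rule cvp_nonneg[OF assms(1) b'nn assms(3)])
    have "cv n b (cvp n b m y) j \<le> cv n b (cvp n b' m y) j"
      using Suc assms by (intro cv_mono) auto
    also have "\<dots> \<le> cv n b' (cvp n b' m y) j"
      using assms nn by (intro cv_mono_b) auto
    finally show "cvp n b (Suc m) y j \<le> cvp n b' (Suc m) y j" by simp
  qed
qed

lemma cv_ge_self:
  assumes "i < n" "b 0 = 1" shows "y i \<le> cv n b y i"
  using cv_ge_term[of 0 n b y i] assms by simp

lemma cvp_mono_m: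
  assumes "i < n" "b 0 = 1" "m \<le> m'" shows "cvp n b m y i \<le> cvp n b m' y i"
  using assms(3)
proof (induction m' rule: dec_induct)
  case base then show ?case by simp
next
  case (step k)
  then show ?case using cv_ge_self[of i n b "cvp n b k y"] assms by simp
qed

lemma cvp_add: "cvp n b (m + k) y = cvp n b m (cvp n b k y)"
  by (induction m) auto

lemma cv_shift: "cv n b y ((i + s) mod n) = cv n b (\<lambda>j. y ((j + s) mod n)) i"
  unfolding cv_def
proof (intro arg_cong[where f=Max] image_cong refl)
  fix e
  have "((i + s) mod n + e) mod n = ((i + e) mod n + s) mod n"
    by (simp add: mod_add_left_eq mod_add_right_eq add_ac)
  then show "b e * y (((i + s) mod n + e) mod n) = b e * y (((i + e) mod n + s) mod n)" by simp
qed

lemma cvp_shift: "cvp n b m y ((i + s) mod n) = cvp n b m (\<lambda>j. y ((j + s) mod n)) i"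
proof (induction m arbitrary: i)
  case 0 then show ?case by simp
next
  case (Suc m)
  have "cvp n b (Suc m) y ((i + s) mod n) = cv n b (\<lambda>j. cvp n b m y ((j + s) mod n)) i"
    by (simp add: cv_shift)
  also have "(\<lambda>j. cvp n b m y ((j + s) mod n)) = cvp n b m (\<lambda>j. y ((j + s) mod n))"
    using Suc by (intro ext) simp
  finally show ?case by simp
qed

lemma circ_nonneg:
  assumes "n \<ge> 1" "\<forall>t<n. 0 \<le> a t" shows "\<forall>i j. 0 \<le> Circ n a i j"
  unfolding Circ_def using assms by (auto simp: mod_lt)

lemma circ_pow_vec:
  assumes n: "n \<ge> 1" and a: "\<forall>t<n. 0 \<le> a t" and y: "\<forall>j<n. 0 \<le> y j"
  shows "\<forall>i<n. mp_vec n (mp_pow n (Circ n a) m) y i = cvp n a m y i"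
proof (induction m)
  case 0 then show ?case using y by (simp add: mp_vec_id)
next
  case (Suc m)
  show ?case
  proof (intro allI impI)
    fix i assume i: "i < n"
    have "mp_vec n (mp_pow n (Circ n a) (Suc m)) y i = mp_vec n (Circ n a) (mp_vec n (mp_pow n (Circ n a) m) y) i"
      using n y circ_nonneg[OF n a] mp_pow_nonneg[OF n circ_nonneg[OF n a]] by (simp add: mp_vec_mult)
    also have "\<dots> = cv n a (mp_vec n (mp_pow n (Circ n a) m) y) i" using circ_vec[OF n i] by simp
    also have "\<dots> = cv n a (cvp n a m y) i" using cv_cong[OF n Suc.IH, of a] by simp
    finally show "mp_vec n (mp_pow n (Circ n a) (Suc m)) y i = cvp n a (Suc m) y i" by simp
  qed
qed

definition wval :: "nat \<Rightarrow> (nat \<Rightarrow> real) \<Rightarrow> nat list \<Rightarrow> (nat \<Rightarrow> real) \<Rightarrow> nat \<Rightarrow> real" where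
  "wval n b es y i = prod_list (map b es) * y ((i + sum_list es) mod n)"

lemma walk_le:
  assumes "n \<ge> 1" "\<forall>e<n. 0 \<le> b e" "\<forall>j<n. 0 \<le> y j"
  shows "set es \<subseteq> {..<n} \<Longrightarrow> i < n \<Longrightarrow> wval n b es y i \<le> cvp n b (length es) y i"
proof (induction es arbitrary: i)
  case Nil then show ?case by (simp add: wval_def)
next
  case (Cons e es)
  have e: "e < n" using Cons by auto
  have "wval n b (e # es) y i = b e * wval n b es y ((i + e) mod n)"
    unfolding wval_def by (simp add: mod_add_left_eq mod_add_right_eq add_ac)
  also have "\<dots> \<le> b e * cvp n b (length es) y ((i + e) mod n)"
    using Cons assms e by (intro mult_left_mono) (auto simp: mod_lt)
  also have "\<dots> \<le> cvp n b (length (e # es)) y i" using cv_ge_term[OF e] by simp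
  finally show ?case .
qed

lemma walk_ex:
  assumes "n \<ge> 1"
  shows "i < n \<Longrightarrow> \<exists>es. length es = m \<and> set es \<subseteq> {..<n} \<and> cvp n b m y i = wval n b es y i"
proof (induction m arbitrary: i)
  case 0 then show ?case by (simp add: wval_def)
next
  case (Suc m)
  obtain e where e: "e < n" "cv n b (cvp n b m y) i = b e * cvp n b m y ((i + e) mod n)"
    using cv_attained[OF assms(1)] by blast
  have ie: "(i + e) mod n < n" using assms by simp
  obtain es where es: "length es = m" "set es \<subseteq> {..<n}" "cvp n b m y ((i + e) mod n) = wval n b es y ((i + e) mod n)"
    using Suc.IH[OF ie] by blast
  have "wval n b (e # es) y i = b e * wval n b es y ((i + e) mod n)"
    unfolding wval_def by (simp add: mod_add_left_eq mod_add_right_eq add_ac)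
  then show ?case using e es by (intro exI[of _ "e # es"]) auto
qed

lemma pigeon:
  fixes es :: "nat list"
  assumes "n \<ge> 1" "length es \<ge> n"
  shows "\<exists>a b. a < b \<and> b \<le> n \<and> sum_list (take a es) mod n = sum_list (take b es) mod n"
proof (rule ccontr)
  assume H: "\<not> ?thesis"
  let ?f = "\<lambda>k. sum_list (take k es) mod n"
  have "inj_on ?f {..n}"
  proof (rule inj_onI)
    fix x y assume xy: "x \<in> {..n}" "y \<in> {..n}" "?f x = ?f y"
    show "x = y"
    proof (rule ccontr)
      assume "x \<noteq> y"
      then have "x < y \<or> y < x" by arith
      then show False using H xy by (metis atMost_iff)
    qed
  qed
  moreover have "?f ` {..n} \<subseteq> {..<n}" using assms(1) by auto
  ultimately have "card {..n} \<le> card {..<n}" by (intro card_inj_on_le) auto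
  then show False by simp
qed

lemma nat_mod_cancel:
  fixes p q n :: nat
  assumes "n \<ge> 1" "p mod n = (p + q) mod n"
  shows "q mod n = 0"
proof -
  have "int ((p + q) mod n) = int (p mod n)" using assms by simp
  then have "(int p + int q) mod int n = int p mod int n" by (simp add: zmod_int)
  then have "((int p + int q) mod int n - int p mod int n) mod int n = 0" by simp
  then have "int q mod int n = 0" by (simp add: mod_diff_eq)
  then have "int (q mod n) = 0" by (simp add: zmod_int)
  then show ?thesis by simp
qed

lemma prod_le_one:
  assumes "\<forall>e<n. 0 \<le> b e \<and> b e \<le> (1::real)" "set w \<subseteq> {..<n}"
  shows "0 \<le> prod_list (map b w) \<and> prod_list (map b w) \<le> 1"
  using assms(2)
proof (induction w)
  case Nil then show ?case by simp
next
  case (Cons e w)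
  then have "0 \<le> b e" "b e \<le> 1" using assms(1) by auto
  then show ?case using Cons by (auto intro: mult_le_one)
qed

lemma stab:
  assumes n: "n \<ge> 1" and b: "\<forall>e<n. 0 \<le> b e \<and> b e \<le> 1" and b0: "b 0 = 1" and y: "\<forall>j<n. 0 \<le> y j"
  shows "i < n \<Longrightarrow> cvp n b m y i \<le> cvp n b (n - 1) y i"
proof (induction m arbitrary: i rule: less_induct)
  case (less m)
  show ?case
  proof (cases "m \<le> n - 1")
    case True then show ?thesis using cvp_mono_m[of i n b m "n - 1" y] less.prems b0 by simp
  next
    case False
    then have mn: "m \<ge> n" by simp
    obtain es where es: "length es = m" "set es \<subseteq> {..<n}" "cvp n b m y i = wval n b es y i"
      using walk_ex[OF n less.prems] by blast
    obtain p q where pq: "p < q" "q \<le> n" "sum_list (take p es) mod n = sum_list (take q es) mod n"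
      using pigeon[OF n, of es] es mn by auto
    define u where "u = take p es"
    define w where "w = take (q - p) (drop p es)"
    define r where "r = drop q es"
    have tq: "take q es = u @ w" unfolding u_def w_def using take_add[of p "q - p" es] pq by simp
    have esd: "es = u @ w @ r" using append_take_drop_id[of q es] tq r_def by simp
    have "sum_list u mod n = (sum_list u + sum_list w) mod n" using pq(3) tq unfolding u_def by simp
    then have sw: "sum_list w mod n = 0" by (rule nat_mod_cancel[OF n])
    have sets: "set u \<subseteq> {..<n}" "set w \<subseteq> {..<n}" "set r \<subseteq> {..<n}" using es(2) esd by auto
    have lw: "length w = q - p" unfolding w_def using pq es mn by simp
    have lur: "length (u @ r) < m" using esd es(1) lw pq by simp
    have idx: "(i + sum_list es) mod n = (i + sum_list (u @ r)) mod n"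
    proof -
      have "(i + sum_list es) mod n = ((i + sum_list (u @ r)) + sum_list w) mod n" using esd by (simp add: add_ac)
      also have "\<dots> = ((i + sum_list (u @ r)) + sum_list w mod n) mod n" by (simp add: mod_add_right_eq)
      finally show ?thesis using sw by simp
    qed
    have pw: "0 \<le> prod_list (map b w)" "prod_list (map b w) \<le> 1" using prod_le_one[OF b sets(2)] by auto
    have pu: "0 \<le> prod_list (map b u)" "0 \<le> prod_list (map b r)" using prod_le_one[OF b] sets by auto
    have yy: "0 \<le> y ((i + sum_list (u @ r)) mod n)" using y n by (simp add: mod_lt)
    have "wval n b es y i = prod_list (map b w) * (prod_list (map b (u @ r)) * y ((i + sum_list (u @ r)) mod n))"
      unfolding wval_def using esd idx by (simp add: algebra_simps)
    also have "\<dots> \<le> 1 * (prod_list (map b (u @ r)) * y ((i + sum_list (u @ r)) mod n))"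
      using pw pu yy by (intro mult_right_mono) auto
    also have "\<dots> = wval n b (u @ r) y i" unfolding wval_def by simp
    also have "\<dots> \<le> cvp n b (length (u @ r)) y i"
      using b y sets less.prems by (intro walk_le[OF n]) auto
    also have "\<dots> \<le> cvp n b (n - 1) y i" using less.IH[OF lur less.prems] .
    finally show ?thesis using es(3) by simp
  qed
qed

lemma stab_eq:
  assumes n: "n \<ge> 1" and b: "\<forall>e<n. 0 \<le> b e \<and> b e \<le> 1" and b0: "b 0 = 1" and y: "\<forall>j<n. 0 \<le> y j"
    and "i < n" "m \<ge> n - 1"
  shows "cvp n b m y i = cvp n b (n - 1) y i"
  using stab[OF n b b0 y, of i m] cvp_mono_m[of i n b "n - 1" m y] assms by simp

lemma circ_step:
  fixes n s j :: nat
  assumes "n \<ge> 1" "s < n"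
  shows "(((j + 1) * s) mod n + n - (j * s) mod n) mod n = s"
proof -
  have Y: "(j * s) mod n \<le> n" using assms by (simp add: less_imp_le)
  have "int ((((j + 1) * s) mod n + n - (j * s) mod n) mod n)
        = (int (((j + 1) * s) mod n) + int n - int ((j * s) mod n)) mod int n"
    using Y by (simp add: zmod_int of_nat_diff)
  also have "\<dots> = ((int (((j + 1) * s) mod n) - int ((j * s) mod n)) + int n) mod int n"
    by (simp add: algebra_simps)
  also have "\<dots> = (int (((j + 1) * s) mod n) - int ((j * s) mod n)) mod int n"
    by (rule mod_add_self2)
  also have "\<dots> = ((int ((j + 1) * s)) mod int n - (int (j * s)) mod int n) mod int n"
    by (simp add: zmod_int)
  also have "\<dots> = (int ((j + 1) * s) - int (j * s)) mod int n" by (simp add: mod_diff_eq)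
  also have "\<dots> = int s mod int n" by (simp add: algebra_simps)
  also have "\<dots> = int s" using assms by simp
  finally show ?thesis by simp
qed

lemma lam_circ:
  assumes n: "n \<ge> 1" and a: "\<forall>t<n. 0 \<le> a t"
  shows "mp_lambda n (Circ n a) = Max (a ` {..<n})"
proof -
  define L where "L = Max (a ` {..<n})"
  define S where "S = {root k (\<Prod>j<k. Circ n a (\<sigma> j) (\<sigma> ((j + 1) mod k))) | k \<sigma>.
       1 \<le> k \<and> k \<le> n \<and> (\<forall>j<k. \<sigma> j < n) \<and> (\<forall>j\<ge>k. \<sigma> j = 0)}"
  have "a 0 \<in> a ` {..<n}" using n by simp
  then have ne: "a ` {..<n} \<noteq> {}" by blast
  have aL: "\<forall>t<n. a t \<le> L" unfolding L_def by auto
  have L0: "0 \<le> L" using aL a n by (meson order.trans zero_less_one less_le_trans)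
  define Sig where "Sig = {\<sigma>::nat\<Rightarrow>nat. \<forall>x. (x \<in> {..<n} \<longrightarrow> \<sigma> x \<in> {..<n}) \<and> (x \<notin> {..<n} \<longrightarrow> \<sigma> x = 0)}"
  have fSig: "finite Sig" unfolding Sig_def by (rule finite_set_of_finite_funs) auto
  have "S \<subseteq> (\<lambda>(k, \<sigma>). root k (\<Prod>j<k. Circ n a (\<sigma> j) (\<sigma> ((j + 1) mod k)))) ` ({..n} \<times> Sig)"
  proof
    fix v assume "v \<in> S"
    then obtain k \<sigma> where v: "v = root k (\<Prod>j<k. Circ n a (\<sigma> j) (\<sigma> ((j + 1) mod k)))"
      and k: "1 \<le> k" "k \<le> n" and s1: "\<forall>j<k. \<sigma> j < n" and s2: "\<forall>j\<ge>k. \<sigma> j = 0"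
      unfolding S_def by blast
    have "\<sigma> \<in> Sig" unfolding Sig_def
    proof (intro CollectI allI conjI impI)
      fix x assume "x \<in> {..<n}" then show "\<sigma> x \<in> {..<n}" using s1 s2 n
        by (cases "x < k") auto
    next
      fix x assume "x \<notin> {..<n}" then show "\<sigma> x = 0" using s2 k by auto
    qed
    then show "v \<in> (\<lambda>(k, \<sigma>). root k (\<Prod>j<k. Circ n a (\<sigma> j) (\<sigma> ((j + 1) mod k)))) ` ({..n} \<times> Sig)"
      using v k by force
  qed
  moreover have "finite ((\<lambda>(k, \<sigma>). root k (\<Prod>j<k. Circ n a (\<sigma> j) (\<sigma> ((j + 1) mod k)))) ` ({..n} \<times> Sig))"
    using fSig by simp
  ultimately have fS: "finite S" by (rule finite_subset)
  have ub: "v \<le> L" if "v \<in> S" for v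
  proof -
    obtain k \<sigma> where v: "v = root k (\<Prod>j<k. Circ n a (\<sigma> j) (\<sigma> ((j + 1) mod k)))"
      and k: "1 \<le> k" "k \<le> n"
      using \<open>v \<in> S\<close> unfolding S_def by blast
    have f: "0 \<le> Circ n a i j \<and> Circ n a i j \<le> L" for i j
      unfolding Circ_def using a aL n by (simp add: mod_lt)
    have "(\<Prod>j<k. Circ n a (\<sigma> j) (\<sigma> ((j + 1) mod k))) \<le> (\<Prod>j<k. L)"
      using f by (intro prod_mono) auto
    then have "v \<le> root k (L ^ k)" unfolding v using k by (intro real_root_le_mono) auto
    also have "\<dots> = L" using k L0 by (simp add: real_root_power_cancel)
    finally show ?thesis .
  qed
  obtain s where s: "s < n" "a s = L" using Max_in[OF _ ne] unfolding L_def by auto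
  define \<sigma> where "\<sigma> = (\<lambda>j. if j < n then (j * s) mod n else 0)"
  have fac: "Circ n a (\<sigma> j) (\<sigma> ((j + 1) mod n)) = L" if "j < n" for j
  proof -
    have "\<sigma> ((j + 1) mod n) = ((j + 1) * s) mod n" unfolding \<sigma>_def using n
      by (simp add: mod_mult_left_eq)
    moreover have "\<sigma> j = (j * s) mod n" unfolding \<sigma>_def using that by simp
    ultimately show ?thesis unfolding Circ_def using circ_step[OF n s(1), of j] s by simp
  qed
  have "(\<Prod>j<n. Circ n a (\<sigma> j) (\<sigma> ((j + 1) mod n))) = L ^ n"
    using fac by simp
  then have "root n (\<Prod>j<n. Circ n a (\<sigma> j) (\<sigma> ((j + 1) mod n))) = L"
    using n L0 by (simp add: real_root_power_cancel)
  moreover have "\<forall>j<n. \<sigma> j < n" "\<forall>j\<ge>n. \<sigma> j = 0" unfolding \<sigma>_def using n by auto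
  ultimately have LS: "L \<in> S" unfolding S_def using n by blast
  have "Max S = L" by (rule Max_eqI[OF fS ub LS])
  then show ?thesis unfolding mp_lambda_def S_def L_def by simp
qed

lemma reindex_Max:
  fixes s n :: nat
  assumes "s < n"
  shows "Max ((\<lambda>e. g ((e + s) mod n)) ` {..<n}) = Max (g ` {..<n})"
proof -
  have "(\<lambda>e. g ((e + s) mod n)) ` {..<n} = g ` ((\<lambda>e. (s + e) mod n) ` {..<n})"
    unfolding image_image by (intro image_cong refl) (simp only: add.commute)
  then show ?thesis using shift_image[OF assms] by simp
qed

lemma scale_shift:
  assumes n: "n \<ge> 1" and L: "L > 0" and s: "s < n"
    and b: "b = (\<lambda>e. a ((e + s) mod n) / L)"
  shows "\<forall>i<n. cvp n a m y i = L ^ m * cvp n b m y ((i + m * s) mod n)"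
proof (induction m)
  case 0 then show ?case by simp
next
  case (Suc m)
  show ?case
  proof (intro allI impI)
    fix i assume i: "i < n"
    have ne: "{..<n} \<noteq> {}" using n by (metis lessThan_iff less_le_trans zero_less_one empty_iff)
    have "cvp n a (Suc m) y i = Max ((\<lambda>e. a e * (L ^ m * cvp n b m y (((i + e) mod n + m * s) mod n))) ` {..<n})"
      unfolding cvp.simps cv_def using Suc n by (simp add: mod_lt)
    also have "\<dots> = Max ((\<lambda>e. a ((e + s) mod n) * (L ^ m * cvp n b m y (((i + (e + s) mod n) mod n + m * s) mod n))) ` {..<n})"
      using reindex_Max[OF s, of "\<lambda>e. a e * (L ^ m * cvp n b m y (((i + e) mod n + m * s) mod n))"] by simp
    also have "\<dots> = Max ((\<lambda>e. L ^ Suc m * (b e * cvp n b m y (((i + Suc m * s) mod n + e) mod n))) ` {..<n})"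
    proof (intro arg_cong[where f=Max] image_cong refl)
      fix e
      have idx: "((i + (e + s) mod n) mod n + m * s) mod n = ((i + Suc m * s) mod n + e) mod n"
        by (simp add: mod_add_left_eq mod_add_right_eq add_ac)
      show "a ((e + s) mod n) * (L ^ m * cvp n b m y (((i + (e + s) mod n) mod n + m * s) mod n)) =
            L ^ Suc m * (b e * cvp n b m y (((i + Suc m * s) mod n + e) mod n))"
        unfolding idx b using L by (simp add: field_simps)
    qed
    also have "\<dots> = L ^ Suc m * cvp n b (Suc m) y ((i + Suc m * s) mod n)"
      unfolding cvp.simps cv_def using mult_Max[of "L ^ Suc m" "{..<n}", OF _ _ ne] L by simp
    finally show "cvp n a (Suc m) y i = L ^ Suc m * cvp n b (Suc m) y ((i + Suc m * s) mod n)" .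
  qed
qed

lemma sum_eq_le:
  fixes f g :: "nat \<Rightarrow> real"
  assumes "finite A" "\<forall>j\<in>A. f j \<le> g j" "sum f A = sum g A"
  shows "\<forall>j\<in>A. f j = g j"
proof (rule ccontr)
  assume "\<not> ?thesis"
  then have "\<exists>j\<in>A. f j < g j" using assms(2) by force
  then have "sum f A < sum g A" using sum_strict_mono_ex1[OF assms(1)] assms(2) by blast
  then show False using assms(3) by simp
qed

lemma shift_sum:
  fixes z :: "nat \<Rightarrow> real"
  assumes "s < n"
  shows "(\<Sum>j<n. z ((j + s) mod n)) = (\<Sum>j<n. z j)"
proof -
  have inj: "inj_on (\<lambda>j. (s + j) mod n) {..<n}"
    using assms by (intro eq_card_imp_inj_on) (auto simp: shift_image)
  have "(\<Sum>j<n. z j) = (\<Sum>j\<in>(\<lambda>j. (s + j) mod n) ` {..<n}. z j)" using shift_image[OF assms] by simp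
  also have "\<dots> = (\<Sum>j<n. z ((s + j) mod n))" using sum.reindex[OF inj] by simp
  finally show ?thesis by (simp add: add.commute)
qed

lemma criterion:
  assumes n: "n \<ge> 1" and a: "\<forall>t<n. 0 \<le> a t" and L: "L = Max (a ` {..<n})" "L > 0"
    and s: "s < n" "a s = L" and x: "\<forall>j<n. 0 \<le> x j"
    and b: "b = (\<lambda>e. a ((e + s) mod n) / L)"
  shows "x \<in> Attr n (Circ n a) \<longleftrightarrow> (\<forall>i<n. cvp n b (n - 1) x ((i + s) mod n) = cvp n b (n - 1) x i)"
proof -
  have aL: "\<forall>t<n. a t \<le> L" unfolding L by auto
  have bb: "\<forall>e<n. 0 \<le> b e \<and> b e \<le> 1" unfolding b using a aL L(2) n by (auto simp: mod_lt)
  have b0: "b 0 = 1" unfolding b using s L(2) by simp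
  define cond where "cond t = (\<forall>j<n. cvp n b (Suc t) x ((j + s) mod n) = cvp n b t x j)" for t
  have att: "x \<in> Attr n (Circ n a) \<longleftrightarrow> (\<exists>t. \<forall>i<n. cvp n a (Suc t) x i = L * cvp n a t x i)"
  proof -
    have e1: "\<forall>t. \<forall>i<n. mp_vec n (mp_pow n (Circ n a) t) x i = cvp n a t x i" using circ_pow_vec[OF n a x] by blast
    show ?thesis unfolding Attr_def nonneg_vec_def lam_circ[OF n a] L(1)[symmetric]
      using x e1 by (simp del: mp_pow.simps cvp.simps)
  qed
  have eqv: "(\<forall>i<n. cvp n a (Suc t) x i = L * cvp n a t x i) \<longleftrightarrow> cond t" for t
  proof -
    have "(\<forall>i<n. cvp n a (Suc t) x i = L * cvp n a t x i) \<longleftrightarrow>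
          (\<forall>i<n. cvp n b (Suc t) x (((i + t * s) mod n + s) mod n) = cvp n b t x ((i + t * s) mod n))"
    proof -
      have "cvp n a (Suc t) x i = L * cvp n a t x i \<longleftrightarrow>
            cvp n b (Suc t) x (((i + t * s) mod n + s) mod n) = cvp n b t x ((i + t * s) mod n)" if "i < n" for i
      proof -
        have idx: "(i + Suc t * s) mod n = ((i + t * s) mod n + s) mod n"
          by (simp add: mod_add_left_eq mod_add_right_eq add_ac)
        have "cvp n a (Suc t) x i = L ^ Suc t * cvp n b (Suc t) x (((i + t * s) mod n + s) mod n)"
          using scale_shift[OF n L(2) s(1) b, of "Suc t" x] that idx by simp
        moreover have "L * cvp n a t x i = L ^ Suc t * cvp n b t x ((i + t * s) mod n)"
          using scale_shift[OF n L(2) s(1) b, of t x] that by simp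
        ultimately show ?thesis using L(2) by simp
      qed
      then show ?thesis by blast
    qed
    also have "\<dots> \<longleftrightarrow> cond t"
    proof -
      have img: "(\<lambda>i. (i + t * s) mod n) ` {..<n} = {..<n}"
        using shift_image[of "(t * s) mod n" n] n by (simp add: add.commute mod_add_right_eq)
      show ?thesis unfolding cond_def
      proof
        assume H: "\<forall>i<n. cvp n b (Suc t) x (((i + t * s) mod n + s) mod n) = cvp n b t x ((i + t * s) mod n)"
        show "\<forall>j<n. cvp n b (Suc t) x ((j + s) mod n) = cvp n b t x j"
        proof (intro allI impI)
          fix j assume "j < n"
          then have "j \<in> (\<lambda>i. (i + t * s) mod n) ` {..<n}" using img by simp
          then obtain i where i: "i < n" "j = (i + t * s) mod n" by blast
          show "cvp n b (Suc t) x ((j + s) mod n) = cvp n b t x j" using H i by blast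
        qed
      next
        assume H: "\<forall>j<n. cvp n b (Suc t) x ((j + s) mod n) = cvp n b t x j"
        show "\<forall>i<n. cvp n b (Suc t) x (((i + t * s) mod n + s) mod n) = cvp n b t x ((i + t * s) mod n)"
          using H n by (simp add: mod_lt)
      qed
    qed
    finally show ?thesis .
  qed
  define F where "F = cvp n b (n - 1) x"
  have "(\<exists>t. cond t) \<longleftrightarrow> (\<forall>i<n. F ((i + s) mod n) = F i)"
  proof
    assume hyp: "\<forall>i<n. F ((i + s) mod n) = F i"
    have "cond (n - 1)" unfolding cond_def
    proof (intro allI impI)
      fix j assume j: "j < n"
      have js: "(j + s) mod n < n" using n by simp
      have le: "Suc (n - 1) \<ge> n - 1" by simp
      have "cvp n b (Suc (n - 1)) x ((j + s) mod n) = F ((j + s) mod n)"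
        unfolding F_def by (rule stab_eq[OF n bb b0 x js le])
      then show "cvp n b (Suc (n - 1)) x ((j + s) mod n) = cvp n b (n - 1) x j"
        using hyp j unfolding F_def by simp
    qed
    then show "\<exists>t. cond t" by blast
  next
    assume "\<exists>t. cond t"
    then obtain t where ct: "cond t" by blast
    define z where "z = cvp n b (Suc t) x"
    have le: "\<forall>j\<in>{..<n}. z ((j + s) mod n) \<le> z j"
      using ct cvp_mono_m[of _ n b t "Suc t" x] b0 unfolding cond_def z_def by auto
    have "\<forall>j\<in>{..<n}. z ((j + s) mod n) = z j"
      by (rule sum_eq_le[OF _ le shift_sum[OF s(1)]]) simp
    then have zs: "\<forall>j<n. z ((j + s) mod n) = z j" and zt: "\<forall>j<n. cvp n b t x j = z j"
      using ct unfolding cond_def z_def by auto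
    have const: "\<forall>j<n. cvp n b (t + k) x j = cvp n b t x j" for k
    proof (induction k)
      case 0 then show ?case by simp
    next
      case (Suc k)
      have "cvp n b (t + Suc k) x = cv n b (cvp n b (t + k) x)" by simp
      also have "\<dots> = cv n b (cvp n b t x)" using cv_cong[OF n Suc.IH] by simp
      also have "\<dots> = z" unfolding z_def by simp
      finally show ?case using zt by simp
    qed
    have Fz: "\<forall>j<n. F j = z j"
    proof (intro allI impI)
      fix j assume j: "j < n"
      have "F j = cvp n b (t + (n - 1)) x j" unfolding F_def using stab_eq[OF n bb b0 x j, of "t + (n - 1)"] by simp
      also have "\<dots> = z j" using const[of "n - 1"] zt j by metis
      finally show "F j = z j" .
    qed
    show "\<forall>i<n. F ((i + s) mod n) = F i" using Fz zs n by (simp add: mod_lt)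
  qed
  then show ?thesis using att eqv unfolding F_def by simp
qed

lemma attr_zero:
  assumes n: "n \<ge> 1" and a: "\<forall>t<n. 0 \<le> a t" and L: "Max (a ` {..<n}) = 0" and x: "\<forall>j<n. 0 \<le> x j"
  shows "x \<in> Attr n (Circ n a)"
proof -
  have a0: "\<forall>t<n. a t = 0" using a L by (metis Max_ge finite_imageI finite_lessThan image_eqI lessThan_iff order.antisym)
  have "cvp n a (Suc 0) x i = 0" if "i < n" for i
  proof -
    have "cv n a x i \<le> 0" using a0 by (intro cv_le[OF n]) auto
    moreover have "0 \<le> cv n a x i" using a x by (intro cv_nonneg[OF n]) auto
    ultimately show ?thesis by simp
  qed
  moreover have e1: "\<forall>t. \<forall>i<n. mp_vec n (mp_pow n (Circ n a) t) x i = cvp n a t x i" using circ_pow_vec[OF n a x] by blast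
  ultimately show ?thesis unfolding Attr_def nonneg_vec_def lam_circ[OF n a] L
    using x by (intro CollectI conjI exI[of _ 0]) (simp_all del: mp_pow.simps cvp.simps)
qed

lemma cvp_cong:
  assumes n: "n \<ge> 1" and "\<forall>j<n. y j = z j"
  shows "\<forall>j<n. cvp n b m y j = cvp n b m z j"
proof (induction m)
  case 0 then show ?case using assms by simp
next
  case (Suc m) then show ?case using cv_cong[OF n Suc.IH] by simp
qed

lemma mono_crit:
  assumes n: "n \<ge> 1" and b: "\<forall>e<n. 0 \<le> b e \<and> b e \<le> 1" "b 0 = 1"
    and b': "\<forall>e<n. 0 \<le> b' e \<and> b' e \<le> 1" "b' 0 = 1"
    and le: "\<forall>e<n. b e \<le> b' e" and x: "\<forall>j<n. 0 \<le> x j"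
    and inv: "\<forall>i<n. cvp n b (n - 1) x ((i + s) mod n) = cvp n b (n - 1) x i"
  shows "\<forall>i<n. cvp n b' (n - 1) x ((i + s) mod n) = cvp n b' (n - 1) x i"
proof -
  define F where "F = cvp n b (n - 1) x"
  define G where "G = cvp n b' (n - 1) x"
  have bnn: "\<forall>e<n. 0 \<le> b e" "\<forall>e<n. 0 \<le> b' e" using b b' by auto
  have Fnn: "\<forall>j<n. 0 \<le> F j" unfolding F_def by (rule cvp_nonneg[OF n bnn(1) x])
  have Gnn: "\<forall>j<n. 0 \<le> G j" unfolding G_def by (rule cvp_nonneg[OF n bnn(2) x])
  have xF: "\<forall>j<n. x j \<le> F j" unfolding F_def using cvp_mono_m[of _ n b 0 "n - 1" x] b by auto
  have FG: "\<forall>j<n. F j \<le> G j" unfolding F_def G_def by (rule cvp_mono_b[OF n bnn(1) x le])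
  have "\<forall>j<n. cvp n b' (n - 1) F j = G j"
  proof (intro allI impI)
    fix j assume j: "j < n"
    have "G j \<le> cvp n b' (n - 1) F j" unfolding G_def using cvp_mono[OF n bnn(2) xF] j by blast
    moreover have "cvp n b' (n - 1) F j \<le> cvp n b' (n - 1) G j" using cvp_mono[OF n bnn(2) FG] j by blast
    moreover have "cvp n b' (n - 1) G j = G j"
      unfolding G_def using cvp_add[of n b' "n - 1" "n - 1" x, symmetric] stab_eq[OF n b' x j, of "n - 1 + (n - 1)"] by simp
    ultimately show "cvp n b' (n - 1) F j = G j" by simp
  qed
  moreover have "\<forall>i<n. cvp n b' (n - 1) F ((i + s) mod n) = cvp n b' (n - 1) F i"
  proof (intro allI impI)
    fix i assume i: "i < n"
    have "cvp n b' (n - 1) F ((i + s) mod n) = cvp n b' (n - 1) (\<lambda>j. F ((j + s) mod n)) i" by (rule cvp_shift)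
    also have "\<dots> = cvp n b' (n - 1) F i"
      using cvp_cong[OF n, of "\<lambda>j. F ((j + s) mod n)" F b' "n - 1"] inv i unfolding F_def by simp
    finally show "cvp n b' (n - 1) F ((i + s) mod n) = cvp n b' (n - 1) F i" by simp
  qed
  ultimately show ?thesis unfolding G_def using n by (simp add: mod_lt)
qed

lemma interval_facts:
  assumes "is_interval_lh lo hi S"
  shows "0 \<le> lo" "lo \<le> hi" "\<forall>v\<in>S. lo \<le> v \<and> v \<le> hi"
    "lo \<notin> S \<Longrightarrow> lo < hi \<and> {lo<..<hi} \<subseteq> S"
    "hi \<notin> S \<Longrightarrow> lo < hi \<and> {lo<..<hi} \<subseteq> S"
  using assms unfolding is_interval_lh_def by auto

definition lseq :: "real \<Rightarrow> real \<Rightarrow> real set \<Rightarrow> nat \<Rightarrow> real" where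
  "lseq lo hi S j = (if lo \<in> S then lo else lo + (hi - lo) / 2 * inverse (real (Suc j)))"

definition hseq :: "real \<Rightarrow> real \<Rightarrow> real set \<Rightarrow> nat \<Rightarrow> real" where
  "hseq lo hi S j = (if hi \<in> S then hi else hi - (hi - lo) / 2 * inverse (real (Suc j)))"

lemma small_pos:
  fixes lo hi :: real
  assumes "lo < hi"
  shows "0 < (hi - lo) / 2 * inverse (real (Suc j))" "(hi - lo) / 2 * inverse (real (Suc j)) < hi - lo"
proof -
  have i: "0 < inverse (real (Suc j))" "inverse (real (Suc j)) \<le> 1" by (auto simp: field_simps)
  show "0 < (hi - lo) / 2 * inverse (real (Suc j))" using assms i by simp
  have "(hi - lo) / 2 * inverse (real (Suc j)) \<le> (hi - lo) / 2 * 1"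
    using assms i by (intro mult_left_mono) auto
  also have "\<dots> < hi - lo" using assms by simp
  finally show "(hi - lo) / 2 * inverse (real (Suc j)) < hi - lo" .
qed

lemma lseq_in: "is_interval_lh lo hi S \<Longrightarrow> lseq lo hi S j \<in> S"
proof -
  assume iv: "is_interval_lh lo hi S"
  show ?thesis
  proof (cases "lo \<in> S")
      case True then show ?thesis by (simp add: lseq_def)
  next
    case False
    then have "lo < hi" "{lo<..<hi} \<subseteq> S" using interval_facts(4)[OF iv] by auto
    then show ?thesis using False small_pos[of lo hi j] by (auto simp: lseq_def)
  qed
qed

lemma hseq_in: "is_interval_lh lo hi S \<Longrightarrow> hseq lo hi S j \<in> S"
proof -
  assume iv: "is_interval_lh lo hi S"
  show ?thesis
  proof (cases "hi \<in> S")
      case True then show ?thesis by (simp add: hseq_def)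
  next
    case False
    then have "lo < hi" "{lo<..<hi} \<subseteq> S" using interval_facts(5)[OF iv] by auto
    then show ?thesis using False small_pos[of lo hi j] by (auto simp: hseq_def)
  qed
qed

lemma inv_lim: "(\<lambda>j. c * inverse (real (Suc j))) \<longlonglongrightarrow> (0::real)"
  using tendsto_mult_right_zero[OF LIMSEQ_inverse_real_of_nat] by simp

lemma lseq_lim: "lseq lo hi S \<longlonglongrightarrow> lo"
proof (cases "lo \<in> S")
  case True
  then have "lseq lo hi S = (\<lambda>j. lo)" by (intro ext) (simp add: lseq_def)
  then show ?thesis by simp
next
  case False
  have "(\<lambda>j. lo + (hi - lo) / 2 * inverse (real (Suc j))) \<longlonglongrightarrow> lo + 0"
    by (intro tendsto_add tendsto_const inv_lim)
  moreover have "lseq lo hi S = (\<lambda>j. lo + (hi - lo) / 2 * inverse (real (Suc j)))"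
    using False by (intro ext) (simp add: lseq_def)
  ultimately show ?thesis by simp
qed

lemma hseq_lim: "hseq lo hi S \<longlonglongrightarrow> hi"
proof (cases "hi \<in> S")
  case True
  then have "hseq lo hi S = (\<lambda>j. hi)" by (intro ext) (simp add: hseq_def)
  then show ?thesis by simp
next
  case False
  have "(\<lambda>j. hi - (hi - lo) / 2 * inverse (real (Suc j))) \<longlonglongrightarrow> hi - 0"
    by (intro tendsto_diff tendsto_const inv_lim)
  moreover have "hseq lo hi S = (\<lambda>j. hi - (hi - lo) / 2 * inverse (real (Suc j)))"
    using False by (intro ext) (simp add: hseq_def)
  ultimately show ?thesis by simp
qed

lemma tendsto_Max_Suc:
  fixes f :: "nat \<Rightarrow> nat \<Rightarrow> real"
  shows "(\<forall>e<Suc m. (\<lambda>j. f j e) \<longlonglongrightarrow> g e) \<Longrightarrow> (\<lambda>j. Max (f j ` {..<Suc m})) \<longlonglongrightarrow> Max (g ` {..<Suc m})"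
proof (induction m)
  case 0 then show ?case by (simp add: lessThan_Suc)
next
  case (Suc m)
  have eq: "Max (h ` {..<Suc (Suc m)}) = max (h (Suc m)) (Max (h ` {..<Suc m}))" for h :: "nat \<Rightarrow> real"
  proof -
    have "h 0 \<in> h ` {..<Suc m}" by simp
    then have ne: "h ` {..<Suc m} \<noteq> {}" by blast
    show ?thesis using Max_insert[OF _ ne, of "h (Suc m)"] by (simp add: lessThan_Suc[of "Suc m"])
  qed
  have "(\<lambda>j. max (f j (Suc m)) (Max (f j ` {..<Suc m}))) \<longlonglongrightarrow> max (g (Suc m)) (Max (g ` {..<Suc m}))"
    using Suc by (intro tendsto_max) auto
  then show ?case unfolding eq .
qed

lemma tendsto_Max_lt:
  fixes f :: "nat \<Rightarrow> nat \<Rightarrow> real"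
  assumes "n \<ge> 1" "\<forall>e<n. (\<lambda>j. f j e) \<longlonglongrightarrow> g e"
  shows "(\<lambda>j. Max (f j ` {..<n})) \<longlonglongrightarrow> Max (g ` {..<n})"
proof -
  obtain m where "n = Suc m" using assms(1) by (cases n) auto
  then show ?thesis using tendsto_Max_Suc[of m f g] assms(2) by simp
qed

lemma tendsto_cvp:
  assumes n: "n \<ge> 1" and b: "\<forall>e<n. (\<lambda>j. bj j e) \<longlonglongrightarrow> b e"
  shows "i < n \<Longrightarrow> (\<lambda>j. cvp n (bj j) m y i) \<longlonglongrightarrow> cvp n b m y i"
proof (induction m arbitrary: i)
  case 0 then show ?case by simp
next
  case (Suc m)
  have "(\<lambda>j. Max ((\<lambda>e. bj j e * cvp n (bj j) m y ((i + e) mod n)) ` {..<n})) \<longlonglongrightarrow>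
        Max ((\<lambda>e. b e * cvp n b m y ((i + e) mod n)) ` {..<n})"
    using b Suc.IH n by (intro tendsto_Max_lt[OF n] allI impI tendsto_mult) (auto simp: mod_lt)
  then show ?case by (simp add: cv_def)
qed

lemma freq_lim:
  fixes f :: "nat \<Rightarrow> real"
  assumes "f \<longlonglongrightarrow> l" "\<exists>\<^sub>F j in sequentially. f j = c"
  shows "l = c"
proof (rule ccontr)
  assume "l \<noteq> c"
  then have "\<forall>\<^sub>F j in sequentially. f j \<noteq> c" using tendsto_imp_eventually_ne[OF assms(1)] by blast
  then show False using assms(2) by (simp add: frequently_def)
qed

lemma bfacts:
  fixes n s :: nat and a :: "nat \<Rightarrow> real"
  assumes n: "n \<ge> 1" and a: "\<forall>t<n. 0 \<le> a t" and L: "L = Max (a ` {..<n})" "L > 0"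
    and s: "s < n" "a s = L"
  shows "\<forall>e<n. 0 \<le> a ((e + s) mod n) / L \<and> a ((e + s) mod n) / L \<le> 1" "a ((0 + s) mod n) / L = 1"
proof -
  have aL: "\<forall>t<n. a t \<le> L"
  proof (intro allI impI)
    fix t assume "t < n" then show "a t \<le> L" unfolding L(1) by (intro Max_ge) auto
  qed
  show "\<forall>e<n. 0 \<le> a ((e + s) mod n) / L \<and> a ((e + s) mod n) / L \<le> 1" using a aL L(2) n by (auto simp: mod_lt)
  show "a ((0 + s) mod n) / L = 1" using s L(2) by simp
qed

lemma Max_attained:
  fixes a :: "nat \<Rightarrow> real"
  assumes "n \<ge> 1" shows "\<exists>s<n. a s = Max (a ` {..<n})"
proof -
  have "a 0 \<in> a ` {..<n}" using assms by simp
  then have "a ` {..<n} \<noteq> {}" by blast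
  from Max_in[OF _ this] show ?thesis by auto
qed

lemma Max_nonneg:
  fixes a :: "nat \<Rightarrow> real"
  assumes "n \<ge> 1" "\<forall>t<n. 0 \<le> a t" shows "0 \<le> Max (a ` {..<n})"
proof -
  have "0 \<le> a 0" using assms by simp
  also have "a 0 \<le> Max (a ` {..<n})" using assms by (intro Max_ge) auto
  finally show ?thesis .
qed

theorem corollary4:
  fixes n :: nat and lo hi :: "nat \<Rightarrow> real" and I :: "nat \<Rightarrow> real set"
    and x :: "nat \<Rightarrow> real"
  assumes "1 \<le> n"
    and "\<forall>t<n. is_interval_lh (lo t) (hi t) (I t)"
    and "nonneg_vec n x"
  shows "(\<forall>A\<in>IC n I. x \<in> Attr n A) \<longleftrightarrow> (\<forall>k<n. x \<in> Attr n (Ak n lo hi k))"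
proof -
  have n: "n \<ge> 1" using assms(1) by simp
  have iv: "\<forall>t<n. is_interval_lh (lo t) (hi t) (I t)" using assms(2) .
  have x: "\<forall>j<n. 0 \<le> x j" using assms(3) unfolding nonneg_vec_def .
  have lo0: "\<forall>t<n. 0 \<le> lo t" and lohi: "\<forall>t<n. lo t \<le> hi t"
    and inI: "\<forall>t<n. \<forall>v\<in>I t. lo t \<le> v \<and> v \<le> hi t"
    using interval_facts[OF iv[rule_format]] by auto
  show ?thesis
  proof
    assume H: "\<forall>A\<in>IC n I. x \<in> Attr n A"
    show "\<forall>k<n. x \<in> Attr n (Ak n lo hi k)"
    proof (intro allI impI)
      fix k assume k: "k < n"
      define c where "c = (\<lambda>t. if t = k then hi t else lo t)"
      have C: "Ak n lo hi k = Circ n c" unfolding Ak_def c_def ..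
      have cnn: "\<forall>t<n. 0 \<le> c t" unfolding c_def using lo0 lohi by (auto intro: order.trans)
      define Lc where "Lc = Max (c ` {..<n})"
      have Lc0: "0 \<le> Lc" unfolding Lc_def by (rule Max_nonneg[OF n cnn])
      show "x \<in> Attr n (Ak n lo hi k)"
      proof (cases "Lc = 0")
        case True then show ?thesis unfolding C using attr_zero[OF n cnn _ x] Lc_def by simp
      next
        case False
        then have Lcp: "Lc > 0" using Lc0 by simp
        define aj where "aj = (\<lambda>j t. if t = k then hseq (lo t) (hi t) (I t) j else lseq (lo t) (hi t) (I t) j)"
        have ajI: "\<forall>t<n. aj j t \<in> I t" for j unfolding aj_def using iv lseq_in hseq_in by auto
        have ajnn: "\<forall>t<n. 0 \<le> aj j t" for j using ajI inI lo0 by (meson order.trans)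
        have attj: "x \<in> Attr n (Circ n (aj j))" for j
          using H ajI[of j] unfolding IC_def by blast
        have ajlim: "\<forall>t<n. (\<lambda>j. aj j t) \<longlonglongrightarrow> c t"
          unfolding aj_def c_def
        proof (intro allI impI)
          fix t assume "t < n"
          show "(\<lambda>j. if t = k then hseq (lo t) (hi t) (I t) j else lseq (lo t) (hi t) (I t) j)
              \<longlonglongrightarrow> (if t = k then hi t else lo t)"
            using hseq_lim lseq_lim by (cases "t = k") auto
        qed
        define Lj where "Lj = (\<lambda>j. Max (aj j ` {..<n}))"
        have Ljlim: "Lj \<longlonglongrightarrow> Lc" unfolding Lj_def Lc_def by (rule tendsto_Max_lt[OF n ajlim])
        have evpos: "\<forall>\<^sub>F j in sequentially. Lj j > 0" using order_tendstoD(1)[OF Ljlim Lcp] .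
        have "\<exists>s<n. \<exists>\<^sub>F j in sequentially. aj j s = Lj j"
        proof (rule ccontr)
          assume "\<not> ?thesis"
          then have "\<forall>s\<in>{..<n}. \<forall>\<^sub>F j in sequentially. aj j s \<noteq> Lj j"
            by (auto simp: frequently_def)
          then have "\<forall>\<^sub>F j in sequentially. \<forall>s\<in>{..<n}. aj j s \<noteq> Lj j"
            by (intro eventually_ball_finite) auto
          then obtain N where "\<forall>j\<ge>N. \<forall>s\<in>{..<n}. aj j s \<noteq> Lj j" unfolding eventually_sequentially by blast
          then show False using Max_attained[OF n, of "aj N"] unfolding Lj_def by auto
        qed
        then obtain s where s: "s < n" and fs: "\<exists>\<^sub>F j in sequentially. aj j s = Lj j" by blast
        have cs: "c s = Lc"
        proof -
          have "(\<lambda>j. aj j s - Lj j) \<longlonglongrightarrow> c s - Lc" using ajlim s Ljlim by (intro tendsto_diff) auto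
          moreover have "\<exists>\<^sub>F j in sequentially. aj j s - Lj j = 0" using fs by (rule frequently_elim1) simp
          ultimately have "c s - Lc = 0" by (rule freq_lim)
          then show ?thesis by simp
        qed
        define bj where "bj = (\<lambda>j e. aj j ((e + s) mod n) / Lj j)"
        define bc where "bc = (\<lambda>e. c ((e + s) mod n) / Lc)"
        have bjlim: "\<forall>e<n. (\<lambda>j. bj j e) \<longlonglongrightarrow> bc e"
          unfolding bj_def bc_def using ajlim Ljlim Lcp n by (auto intro!: tendsto_divide simp: mod_lt)
        have fgood: "\<exists>\<^sub>F j in sequentially. aj j s = Lj j \<and> Lj j > 0"
          using fs
        proof (rule frequently_rev_mp)
          show "\<forall>\<^sub>F j in sequentially. aj j s = Lj j \<longrightarrow> aj j s = Lj j \<and> 0 < Lj j"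
            using evpos by (rule eventually_mono) auto
        qed
        have inv_c: "\<forall>i<n. cvp n bc (n - 1) x ((i + s) mod n) = cvp n bc (n - 1) x i"
        proof (intro allI impI)
          fix i assume i: "i < n"
          have is': "(i + s) mod n < n" using n by simp
          have "\<exists>\<^sub>F j in sequentially. cvp n (bj j) (n - 1) x ((i + s) mod n) - cvp n (bj j) (n - 1) x i = 0"
          proof (rule frequently_elim1[OF fgood])
            fix j assume j: "aj j s = Lj j \<and> 0 < Lj j"
            have "x \<in> Attr n (Circ n (aj j)) \<longleftrightarrow>
                 (\<forall>i<n. cvp n (bj j) (n - 1) x ((i + s) mod n) = cvp n (bj j) (n - 1) x i)"
              by (rule criterion[OF n ajnn[of j] _ _ s _ x]) (use j in \<open>auto simp: Lj_def bj_def\<close>)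
            then show "cvp n (bj j) (n - 1) x ((i + s) mod n) - cvp n (bj j) (n - 1) x i = 0"
              using attj[of j] i by simp
          qed
          moreover have "(\<lambda>j. cvp n (bj j) (n - 1) x ((i + s) mod n) - cvp n (bj j) (n - 1) x i)
              \<longlonglongrightarrow> cvp n bc (n - 1) x ((i + s) mod n) - cvp n bc (n - 1) x i"
            by (intro tendsto_diff tendsto_cvp[OF n bjlim] is' i)
          ultimately have "cvp n bc (n - 1) x ((i + s) mod n) - cvp n bc (n - 1) x i = 0"
            by (intro freq_lim) auto
          then show "cvp n bc (n - 1) x ((i + s) mod n) = cvp n bc (n - 1) x i" by simp
        qed
        have "x \<in> Attr n (Circ n c) \<longleftrightarrow> (\<forall>i<n. cvp n bc (n - 1) x ((i + s) mod n) = cvp n bc (n - 1) x i)"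
          by (rule criterion[OF n cnn Lc_def Lcp s cs x bc_def])
        then show ?thesis unfolding C using inv_c by simp
      qed
    qed
  next
    assume R: "\<forall>k<n. x \<in> Attr n (Ak n lo hi k)"
    show "\<forall>A\<in>IC n I. x \<in> Attr n A"
    proof
      fix A assume "A \<in> IC n I"
      then obtain a where A: "A = Circ n a" and aI: "\<forall>t<n. a t \<in> I t" unfolding IC_def by blast
      have ann: "\<forall>t<n. 0 \<le> a t" using aI inI lo0 by (meson order.trans)
      define L where "L = Max (a ` {..<n})"
      have L0: "0 \<le> L" unfolding L_def by (rule Max_nonneg[OF n ann])
      show "x \<in> Attr n A"
      proof (cases "L = 0")
        case True then show ?thesis unfolding A using attr_zero[OF n ann _ x] L_def by simp
      next
        case False
        then have Lp: "L > 0" using L0 by simp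
        obtain s where s: "s < n" "a s = L" using Max_attained[OF n, of a] unfolding L_def by auto
        have aL: "\<forall>t<n. a t \<le> L"
        proof (intro allI impI)
          fix t assume "t < n" then show "a t \<le> L" unfolding L_def by (intro Max_ge) auto
        qed
        define c where "c = (\<lambda>t. if t = s then hi t else lo t)"
        have C: "Ak n lo hi s = Circ n c" unfolding Ak_def c_def ..
        have cnn: "\<forall>t<n. 0 \<le> c t" unfolding c_def using lo0 lohi by (auto intro: order.trans)
        have Lhs: "L \<le> hi s" using s aI inI by auto
        have cle: "\<forall>t<n. c t \<le> hi s"
        proof (intro allI impI)
          fix t assume t: "t < n"
          show "c t \<le> hi s"
          proof (cases "t = s")
            case True then show ?thesis unfolding c_def by simp
          next
            case False
            then have "c t = lo t" unfolding c_def by simp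
            also have "\<dots> \<le> a t" using aI inI t by auto
            also have "\<dots> \<le> hi s" using aL t Lhs by auto
            finally show ?thesis .
          qed
        qed
        have Lc: "Max (c ` {..<n}) = hi s"
          using cle s(1) by (intro Max_eqI) (auto simp: c_def)
        have hsp: "hi s > 0" using Lp Lhs by simp
        define bc where "bc = (\<lambda>e. c ((e + s) mod n) / hi s)"
        define ba where "ba = (\<lambda>e. a ((e + s) mod n) / L)"
        have "x \<in> Attr n (Ak n lo hi s)" using R s(1) by blast
        then have "x \<in> Attr n (Circ n c)" unfolding C .
        moreover have cs: "c s = hi s" unfolding c_def by simp
        ultimately have invc: "\<forall>i<n. cvp n bc (n - 1) x ((i + s) mod n) = cvp n bc (n - 1) x i"
          using criterion[OF n cnn Lc[symmetric] hsp s(1) cs x bc_def] by blast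
        have bcf: "\<forall>e<n. 0 \<le> bc e \<and> bc e \<le> 1" "bc 0 = 1"
          using bfacts[OF n cnn Lc[symmetric] hsp s(1) cs] unfolding bc_def by auto
        have baf: "\<forall>e<n. 0 \<le> ba e \<and> ba e \<le> 1" "ba 0 = 1"
          using bfacts[OF n ann L_def Lp s] unfolding ba_def by auto
        have le: "\<forall>e<n. bc e \<le> ba e"
        proof (intro allI impI)
          fix e assume e: "e < n"
          define t where "t = (e + s) mod n"
          have t: "t < n" unfolding t_def using n by simp
          show "bc e \<le> ba e"
          proof (cases "t = s")
            case True
            then show ?thesis unfolding bc_def ba_def t_def[symmetric] c_def using s hsp Lp by simp
          next
            case False
            have "lo t / hi s \<le> a t / hi s" using aI inI t hsp by (auto intro: divide_right_mono)
            also have "\<dots> \<le> a t / L" using ann t Lp Lhs by (intro divide_left_mono) auto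
            finally show ?thesis unfolding bc_def ba_def t_def[symmetric] c_def using False by simp
          qed
        qed
        have "\<forall>i<n. cvp n ba (n - 1) x ((i + s) mod n) = cvp n ba (n - 1) x i"
          by (rule mono_crit[OF n bcf baf le x invc])
        then show ?thesis unfolding A using criterion[OF n ann L_def Lp s x ba_def] by simp
      qed
    qed
  qed
qed

end
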